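(* Let $n\ge 1$, let $C_u(v_1),\ldots,C_u(v_n)>0$ and $R_1,\ldots,R_n>0$ be sustainable, i.e. $R_i\le C_u(v_i)$ for all $i$, $\sum_{j\ne i}R_j\le C_d(v_i)$ for all $i$ (for some downlink capacities $C_d(v_i)>0$), and $(n-1)\sum_{i=1}^n R_i\le\sum_{i=1}^n C_u(v_i)$. Then the output $r_{i,j}$ of the algorithm described in the context satisfies the Uplink Capacity Constraint: for every $1\le k\le n$, $$\sum_{j=1}^n r_{k,j} + (n-2)\sum_{i=1}^n r_{i,k} \leq C_u(v_k),$$ i.e. the aggregate uplink rate used by $v_k$ under the two-level broadcast trees described in the context is at most $C_u(v_k)$.
   Context: Sub-stream rate assigning algorithm. Input: $n$, uplink capacities $C_u(v_1),\ldots,C_u(v_n)$ and rates $R_1,\ldots,R_n$. Initialize $r_{i,j}:=0$ for all $1\le i,j\le n$ and $U_i := C_u(v_i)-R_i$ for $1\le i\le n$. Outer loop: for $i=1$ to $n$: set $R'_i := R_i$; inner loop: for $j=1$ to $n$: if $(n-2)R'_i > U_j$ then set $r_{i,j} := U_j/(n-2)$, else set $r_{i,j} := R'_i$; then set $U_j := U_j-(n-2)r_{i,j}$ and $R'_i := R'_i - r_{i,j}$; if $R'_i = 0$, exit the inner loop. Output all $r_{i,j}$. Interpretation: $r_{i,j}$ is the rate of the sub-stream $s_{i,j}$ of site $v_i$'s data stream. Sub-stream $s_{i,i}$ is sent by $v_i$ directly to all $n-1$ other sites (using $(n-1)r_{i,i}$ of $v_i$'s uplink); for $j\neq i$, sub-stream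 $s_{i,j}$ is sent from $v_i$ to $v_j$ (using $r_{i,j}$ of $v_i$'s uplink), and $v_j$ forwards it to the remaining $n-2$ sites (using $(n-2)r_{i,j}$ of $v_j$'s uplink). Hence the total uplink rate used by $v_k$ is $\sum_{j} r_{k,j} + (n-2)\sum_i r_{i,k}$. *)

theory Defs
  imports Complex_Main
begin

text \<open>Sub-stream rate assigning algorithm. Sites are indexed 1..n.
  The state of the inner loop is (r, U, R', exited); the flag records
  that the inner loop has been exited because R' became 0.\<close>

definition inner_step ::
  "nat \<Rightarrow> nat \<Rightarrow> nat \<Rightarrow>
   (nat \<Rightarrow> nat \<Rightarrow> real) \<times> (nat \<Rightarrow> real) \<times> real \<times> bool \<Rightarrow>
   (nat \<Rightarrow> nat \<Rightarrow> real) \<times> (nat \<Rightarrow> real) \<times> real \<times> bool" where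
  "inner_step n i j st =
     (case st of (r, U, R', ex) \<Rightarrow>
       if ex then (r, U, R', ex)
       else (let rij = (if (real n - 2) * R' > U j then U j / (real n - 2) else R');
                 U' = U(j := U j - (real n - 2) * rij);
                 R'' = R' - rij;
                 r' = r(i := (r i)(j := rij))
             in (r', U', R'', R'' = 0)))"

definition outer_step ::
  "nat \<Rightarrow> (nat \<Rightarrow> real) \<Rightarrow> nat \<Rightarrow>
   (nat \<Rightarrow> nat \<Rightarrow> real) \<times> (nat \<Rightarrow> real) \<Rightarrow>
   (nat \<Rightarrow> nat \<Rightarrow> real) \<times> (nat \<Rightarrow> real)" where
  "outer_step n R i st =
     (case st of (r, U) \<Rightarrow>
       (case fold (inner_step n i) [1..<n+1] (r, U, R i, False) of
          (r', U', _, _) \<Rightarrow> (r', U')))"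

definition substream_rates ::
  "nat \<Rightarrow> (nat \<Rightarrow> real) \<Rightarrow> (nat \<Rightarrow> real) \<Rightarrow> nat \<Rightarrow> nat \<Rightarrow> real" where
  "substream_rates n Cu R =
     fst (fold (outer_step n R) [1..<n+1] (\<lambda>_ _. 0, \<lambda>j. Cu j - R j))"

end

theory Submission
  imports Defs
begin

lemma sum_upd_real:
  fixes f :: "nat \<Rightarrow> real"
  assumes "finite A" "a \<in> A"
  shows "sum (f(a := b)) A = sum f A - f a + b"
proof -
  have "sum (f(a := b)) A = (f(a := b)) a + sum (f(a := b)) (A - {a})"
    using assms by (simp add: sum.remove)
  also have "sum (f(a := b)) (A - {a}) = sum f (A - {a})"
    by (rule sum.cong) auto
  also have "sum f A = f a + sum f (A - {a})"
    using assms by (simp add: sum.remove)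
  ultimately show ?thesis by simp
qed

definition Iinv :: "nat \<Rightarrow> nat \<Rightarrow> (nat \<Rightarrow> real) \<Rightarrow> real \<Rightarrow>
   (nat \<Rightarrow> nat \<Rightarrow> real) \<times> (nat \<Rightarrow> real) \<times> real \<times> bool \<Rightarrow> bool" where
  "Iinv n i C Ri st = (case st of (r, U, R', ex) \<Rightarrow>
     (\<forall>k\<in>{1..n}. 0 \<le> U k \<and> (real n - 2) * (\<Sum>i'=1..n. r i' k) + U k = C k)
     \<and> 0 \<le> R' \<and> (\<Sum>j=1..n. r i j) + R' = Ri)"

lemma inner_step_inv:
  assumes i: "i \<in> {1..n}" and j: "j \<in> {1..n}" and z: "r i j = 0"
    and inv: "Iinv n i C Ri (r, U, R', ex)"
  shows "Iinv n i C Ri (inner_step n i j (r, U, R', ex))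
    \<and> (\<forall>i'. i' \<noteq> i \<longrightarrow> fst (inner_step n i j (r, U, R', ex)) i' = r i')
    \<and> (\<forall>j'. j' \<noteq> j \<longrightarrow> fst (inner_step n i j (r, U, R', ex)) i j' = r i j')"
proof (cases ex)
  case True
  then show ?thesis using inv by (simp add: inner_step_def)
next
  case False
  define m where "m = real n - 2"
  define x where "x = (if m * R' > U j then U j / m else R')"
  have U0: "\<forall>k\<in>{1..n}. 0 \<le> U k" and R0: "0 \<le> R'"
    using inv by (auto simp: Iinv_def)
  have Uj: "0 \<le> U j" using U0 j by auto
  have xall: "0 \<le> x \<and> x \<le> R' \<and> 0 \<le> U j - m * x"
  proof (cases "m * R' > U j")
    case True
    have mpos: "m > 0"
    proof (rule ccontr)
      assume "\<not> m > 0"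
      then have "m * R' \<le> 0" using R0 by (simp add: mult_nonpos_nonneg)
      then show False using True Uj by linarith
    qed
    have "U j / m < R'" using True mpos by (simp add: field_simps)
    then show ?thesis using True mpos Uj by (auto simp: x_def)
  next
    case False
    then show ?thesis using R0 by (auto simp: x_def)
  qed
  then have x0: "0 \<le> x" and xR: "x \<le> R'" and Ux: "0 \<le> U j - m * x" by auto
  define r' where "r' = r(i := (r i)(j := x))"
  define U' where "U' = U(j := U j - m * x)"
  have step: "inner_step n i j (r, U, R', ex) = (r', U', R' - x, R' - x = 0)"
    using False by (simp add: inner_step_def Let_def x_def m_def r'_def U'_def)
  have colsum: "(\<Sum>i'=1..n. r' i' k) = (\<Sum>i'=1..n. r i' k) + (if k = j then x else 0)" for k
  proof -
    have "(\<Sum>i'=1..n. r' i' k) = (\<Sum>i'=1..n. ((\<lambda>i'. r i' k)(i := ((r i)(j := x)) k)) i')"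
      by (rule sum.cong) (auto simp: r'_def)
    also have "\<dots> = (\<Sum>i'=1..n. r i' k) - r i k + ((r i)(j := x)) k"
      using i by (subst sum_upd_real) auto
    finally show ?thesis using z by auto
  qed
  have rowsum: "(\<Sum>j'=1..n. r' i j') = (\<Sum>j'=1..n. r i j') + x"
  proof -
    have "(\<Sum>j'=1..n. r' i j') = (\<Sum>j'=1..n. ((r i)(j := x)) j')"
      by (simp add: r'_def)
    also have "\<dots> = (\<Sum>j'=1..n. r i j') - r i j + x"
      using j by (subst sum_upd_real) auto
    finally show ?thesis using z by auto
  qed
  have A: "\<forall>k\<in>{1..n}. 0 \<le> U' k \<and> (real n - 2) * (\<Sum>i'=1..n. r' i' k) + U' k = C k"
  proof
    fix k assume k: "k \<in> {1..n}"
    have old: "m * (\<Sum>i'=1..n. r i' k) + U k = C k"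
      using inv k by (auto simp: Iinv_def m_def)
    have "0 \<le> U' k" using U0 k Ux by (auto simp: U'_def)
    moreover have "m * (\<Sum>i'=1..n. r' i' k) + U' k = C k"
      using old unfolding colsum
      by (auto simp: U'_def algebra_simps)
    ultimately show "0 \<le> U' k \<and> (real n - 2) * (\<Sum>i'=1..n. r' i' k) + U' k = C k"
      by (simp add: m_def)
  qed
  have B: "(\<Sum>j=1..n. r' i j) + (R' - x) = Ri"
    using inv rowsum by (auto simp: Iinv_def)
  have "Iinv n i C Ri (r', U', R' - x, R' - x = 0)"
    unfolding Iinv_def using A B xR by simp
  then show ?thesis using step by (auto simp: r'_def)
qed

lemma inner_fold:
  assumes "distinct js" "set js \<subseteq> {1..n}" "i \<in> {1..n}"
    "\<forall>j\<in>set js. fst st i j = 0" "Iinv n i C Ri st"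
  shows "Iinv n i C Ri (fold (inner_step n i) js st)
    \<and> (\<forall>i'. i' \<noteq> i \<longrightarrow> fst (fold (inner_step n i) js st) i' = fst st i')"
  using assms
proof (induction js arbitrary: st)
  case Nil
  then show ?case by simp
next
  case (Cons j js)
  obtain r U R' ex where st: "st = (r, U, R', ex)" by (cases st) auto
  define st' where "st' = inner_step n i j st"
  have j: "j \<in> {1..n}" using Cons.prems by auto
  have z: "r i j = 0" using Cons.prems st by auto
  have S: "Iinv n i C Ri st'
    \<and> (\<forall>i'. i' \<noteq> i \<longrightarrow> fst st' i' = r i')
    \<and> (\<forall>j'. j' \<noteq> j \<longrightarrow> fst st' i j' = r i j')"
    unfolding st'_def st using inner_step_inv[of i n j r, OF Cons.prems(3) j z] Cons.prems(5) st by simp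
  have "\<forall>j'\<in>set js. fst st' i j' = 0"
    using S Cons.prems st by auto
  then have IH: "Iinv n i C Ri (fold (inner_step n i) js st')
    \<and> (\<forall>i'. i' \<noteq> i \<longrightarrow> fst (fold (inner_step n i) js st') i' = fst st' i')"
    using Cons.IH[of st'] Cons.prems S by auto
  show ?case using IH S st by (simp add: st'_def)
qed

definition Oinv :: "nat \<Rightarrow> (nat \<Rightarrow> real) \<Rightarrow> (nat \<Rightarrow> real) \<Rightarrow>
   (nat \<Rightarrow> nat \<Rightarrow> real) \<times> (nat \<Rightarrow> real) \<Rightarrow> bool" where
  "Oinv n Cu R st = (case st of (r, U) \<Rightarrow>
     (\<forall>k\<in>{1..n}. 0 \<le> U k \<and> (real n - 2) * (\<Sum>i'=1..n. r i' k) + U k = Cu k - R k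
        \<and> (\<Sum>j=1..n. r k j) \<le> R k))"

lemma outer_step_inv:
  assumes i: "i \<in> {1..n}" and Rpos: "0 \<le> R i"
    and z: "\<forall>j. r i j = 0" and inv: "Oinv n Cu R (r, U)"
  shows "Oinv n Cu R (outer_step n R i (r, U))
    \<and> (\<forall>i'. i' \<noteq> i \<longrightarrow> fst (outer_step n R i (r, U)) i' = r i')"
proof -
  obtain r' U' R'' ex where F: "fold (inner_step n i) [1..<n+1] (r, U, R i, False) = (r', U', R'', ex)"
    by (cases "fold (inner_step n i) [1..<n+1] (r, U, R i, False)") auto
  have O: "outer_step n R i (r, U) = (r', U')"
    by (simp only: outer_step_def prod.case F)
  have I0: "Iinv n i (\<lambda>k. Cu k - R k) (R i) (r, U, R i, False)"
    using inv z Rpos by (auto simp: Iinv_def Oinv_def)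
  have "set [1..<n+1] \<subseteq> {1..n}" by auto
  from inner_fold[OF _ this i _ I0] z F
  have I1: "Iinv n i (\<lambda>k. Cu k - R k) (R i) (r', U', R'', ex)"
    and same: "\<forall>i'. i' \<noteq> i \<longrightarrow> r' i' = r i'" by auto
  have "Oinv n Cu R (r', U')"
    unfolding Oinv_def
  proof (simp only: prod.case, intro ballI conjI)
    fix k assume k: "k \<in> {1..n}"
    show "0 \<le> U' k" "(real n - 2) * (\<Sum>i'=1..n. r' i' k) + U' k = Cu k - R k"
      using I1 k by (auto simp: Iinv_def)
    show "(\<Sum>j=1..n. r' k j) \<le> R k"
    proof (cases "k = i")
      case True
      then show ?thesis using I1 by (auto simp: Iinv_def)
    next
      case False
      then show ?thesis using inv k same by (auto simp: Oinv_def)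
    qed
  qed
  then show ?thesis using O same by simp
qed

lemma outer_fold:
  assumes "distinct xs" "set xs \<subseteq> {1..n}" "\<forall>i\<in>{1..n}. 0 \<le> R i"
    "\<forall>i\<in>set xs. \<forall>j. fst st i j = 0" "Oinv n Cu R st"
  shows "Oinv n Cu R (fold (outer_step n R) xs st)"
  using assms
proof (induction xs arbitrary: st)
  case Nil
  then show ?case by simp
next
  case (Cons i xs)
  obtain r U where st: "st = (r, U)" by (cases st) auto
  have i: "i \<in> {1..n}" using Cons.prems by auto
  have S: "Oinv n Cu R (outer_step n R i (r, U))
    \<and> (\<forall>i'. i' \<noteq> i \<longrightarrow> fst (outer_step n R i (r, U)) i' = r i')"
    using outer_step_inv[OF i] Cons.prems st i by auto
  have "\<forall>i'\<in>set xs. \<forall>j. fst (outer_step n R i (r, U)) i' j = 0"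
    using S Cons.prems st by auto
  then show ?case using Cons.IH[of "outer_step n R i (r, U)"] Cons.prems S st by auto
qed

theorem propositionB5:
  fixes n :: nat and Cu Cd R :: "nat \<Rightarrow> real"
  assumes "n \<ge> 1"
    and "\<forall>i\<in>{1..n}. Cu i > 0"
    and "\<forall>i\<in>{1..n}. Cd i > 0"
    and "\<forall>i\<in>{1..n}. R i > 0"
    and "\<forall>i\<in>{1..n}. R i \<le> Cu i"
    and "\<forall>i\<in>{1..n}. (\<Sum>j\<in>{1..n} - {i}. R j) \<le> Cd i"
    and "(real n - 1) * (\<Sum>i=1..n. R i) \<le> (\<Sum>i=1..n. Cu i)"
  shows "\<forall>k\<in>{1..n}.
           (\<Sum>j=1..n. substream_rates n Cu R k j)
           + (real n - 2) * (\<Sum>i=1..n. substream_rates n Cu R i k) \<le> Cu k"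
proof -
  have R0: "\<forall>i\<in>{1..n}. 0 \<le> R i" using assms(4) by (auto simp: less_imp_le)
  have init: "Oinv n Cu R (\<lambda>_ _. 0, \<lambda>j. Cu j - R j)"
    using assms(5) R0 by (auto simp: Oinv_def)
  have "set [1..<n+1] \<subseteq> {1..n}" by auto
  from outer_fold[OF _ this R0 _ init]
  have F: "Oinv n Cu R (fold (outer_step n R) [1..<n+1] (\<lambda>_ _. 0, \<lambda>j. Cu j - R j))"
    by simp
  obtain r U where E: "fold (outer_step n R) [1..<n+1] (\<lambda>_ _. 0, \<lambda>j. Cu j - R j) = (r, U)"
    by (cases "fold (outer_step n R) [1..<n+1] (\<lambda>_ _. 0, \<lambda>j. Cu j - R j)") auto
  have sr: "substream_rates n Cu R = r" by (simp only: substream_rates_def E fst_conv)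
  show ?thesis
  proof
    fix k assume k: "k \<in> {1..n}"
    have "0 \<le> U k" "(real n - 2) * (\<Sum>i'=1..n. r i' k) + U k = Cu k - R k"
      "(\<Sum>j=1..n. r k j) \<le> R k"
      using F E k by (auto simp: Oinv_def)
    then show "(\<Sum>j=1..n. substream_rates n Cu R k j)
           + (real n - 2) * (\<Sum>i=1..n. substream_rates n Cu R i k) \<le> Cu k"
      unfolding sr by linarith
  qed
qed

end
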